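(* Let $k\ge 2$ and $i\in\{1,\ldots,k-1\}$. If $\binom{k}{i}$ is odd and $\binom{k-1}{i}$ is even, then $J(2k,k,i)$ does not admit perfect state transfer.
   Context: $J(2k,k,i)$ is the graph on the $k$-subsets of $\{1,\ldots,2k\}$ with $A\sim B$ iff $|A\cap B|=i$. For a simple graph $X$ with adjacency matrix $A$, let $\mathcal{H}_X(t)=e^{itA}$. $X$ admits perfect state transfer (PST) if $|\mathcal{H}_X(\tau)_{u,v}|=1$ for some vertices $u\ne v$ and some $\tau>0$. *)

theory Defs
  imports Complex_Main
begin

text \<open>A (weighted) graph is given by a finite vertex set V and an adjacency
  function adj; its adjacency matrix is the V x V matrix with entries adj u v.\<close>

fun adj_pow :: "'a set \<Rightarrow> ('a \<Rightarrow> 'a \<Rightarrow> complex) \<Rightarrow> nat \<Rightarrow> 'a \<Rightarrow> 'a \<Rightarrow> complex" where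
  "adj_pow V adj 0 u v = (if u = v then 1 else 0)"
| "adj_pow V adj (Suc n) u v = (\<Sum>w\<in>V. adj u w * adj_pow V adj n w v)"

text \<open>Transition matrix H(t) = exp(i t A), entrywise as the exponential power series.\<close>
definition transition :: "'a set \<Rightarrow> ('a \<Rightarrow> 'a \<Rightarrow> complex) \<Rightarrow> real \<Rightarrow> 'a \<Rightarrow> 'a \<Rightarrow> complex" where
  "transition V adj t u v =
     (\<Sum>n. (\<i> * complex_of_real t) ^ n / of_nat (fact n) * adj_pow V adj n u v)"

definition has_PST :: "'a set \<Rightarrow> ('a \<Rightarrow> 'a \<Rightarrow> complex) \<Rightarrow> bool" where
  "has_PST V adj \<longleftrightarrow>
     (\<exists>u\<in>V. \<exists>v\<in>V. u \<noteq> v \<and> (\<exists>\<tau>>0. cmod (transition V adj \<tau> u v) = 1))"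

definition J_vertices :: "nat \<Rightarrow> nat set set" where
  "J_vertices k = {A. A \<subseteq> {1..2*k} \<and> card A = k}"

definition J_adj :: "nat \<Rightarrow> nat set \<Rightarrow> nat set \<Rightarrow> complex" where
  "J_adj i A B = (if A \<noteq> B \<and> card (A \<inter> B) = i then 1 else 0)"

end

theory Submission
  imports Defs
begin


lemma mult_le_one_trans: "(a::real) \<le> 1 \<Longrightarrow> b \<le> c \<Longrightarrow> 0 \<le> a \<Longrightarrow> 0 \<le> b \<Longrightarrow> a * b \<le> c"
  by (metis mult_left_le_one_le order_trans)

lemma adj_pow_bound:
  assumes "finite V" "\<And>u w. cmod (adj u w) \<le> 1"
  shows "cmod (adj_pow V adj n u v) \<le> real (card V) ^ n"
proof (induction n arbitrary: u)
  case 0 then show ?case by simp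
next
  case (Suc n)
  have "cmod (adj_pow V adj (Suc n) u v) \<le> (\<Sum>w\<in>V. cmod (adj u w * adj_pow V adj n w v))"
    by (simp add: norm_sum)
  also have "\<dots> \<le> (\<Sum>w\<in>V. real (card V) ^ n)"
  proof (rule sum_mono)
    fix w show "cmod (adj u w * adj_pow V adj n w v) \<le> real (card V) ^ n"
      using Suc.IH[of w] assms(2)[of u w] unfolding norm_mult by (simp add: mult_le_one_trans)
  qed
  also have "\<dots> = real (card V) ^ Suc n" by simp
  finally show ?case .
qed

definition tt :: "real \<Rightarrow> nat \<Rightarrow> complex" where
  "tt t n = (\<i> * complex_of_real t) ^ n / of_nat (fact n)"

lemma tt_exp: "tt t n = (\<i> * complex_of_real t) ^ n /\<^sub>R fact n"
  by (simp add: tt_def scaleR_conv_of_real divide_inverse of_real_inverse[symmetric] mult.commute)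

lemma summable_tt:
  assumes "finite V" "\<And>u w. cmod (adj u w) \<le> 1"
  shows "summable (\<lambda>n. norm (tt t n * adj_pow V adj n u v))"
proof (rule summable_comparison_test[OF exI])
  let ?x = "complex_of_real (\<bar>t\<bar> * real (card V))"
  show "summable (\<lambda>n. norm (?x ^ n /\<^sub>R fact n))" by (rule summable_norm_exp)
  show "\<forall>n\<ge>0. norm (norm (tt t n * adj_pow V adj n u v)) \<le> norm (?x ^ n /\<^sub>R fact n)"
  proof (intro allI impI)
    fix n :: nat
    have "norm (tt t n * adj_pow V adj n u v) = \<bar>t\<bar>^n / fact n * cmod (adj_pow V adj n u v)"
      by (simp add: tt_def norm_mult norm_divide norm_power)
    also have "\<dots> \<le> \<bar>t\<bar>^n / fact n * real (card V) ^ n"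
      by (rule mult_left_mono[OF adj_pow_bound[OF assms]]) simp
    also have "\<dots> = norm (?x ^ n /\<^sub>R fact n)"
      by (simp add: norm_power power_mult_distrib abs_mult norm_mult divide_inverse mult.commute)
    finally show "norm (norm (tt t n * adj_pow V adj n u v)) \<le> norm (?x ^ n /\<^sub>R fact n)" by simp
  qed
qed

lemma transition_tt: "transition V adj t u v = (\<Sum>n. tt t n * adj_pow V adj n u v)"
  by (simp add: transition_def tt_def)

lemma adj_pow_comp:
  assumes "u \<in> V" "finite V"
  shows "adj_pow V adj (m + n) u v = (\<Sum>w\<in>V. adj_pow V adj m u w * adj_pow V adj n w v)"
  using assms(1)
proof (induction m arbitrary: u)
  case 0
  have "(\<Sum>w\<in>V. adj_pow V adj 0 u w * adj_pow V adj n w v) = (\<Sum>w\<in>V. if u = w then adj_pow V adj n w v else 0)"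
    by (rule sum.cong) auto
  then show ?case using 0 assms(2) by (simp add: sum.delta)
next
  case (Suc m)
  have "adj_pow V adj (Suc m + n) u v = (\<Sum>w\<in>V. adj u w * adj_pow V adj (m + n) w v)" by simp
  also have "\<dots> = (\<Sum>w\<in>V. adj u w * (\<Sum>z\<in>V. adj_pow V adj m w z * adj_pow V adj n z v))"
    by (rule sum.cong) (simp_all add: Suc.IH)
  also have "\<dots> = (\<Sum>z\<in>V. (\<Sum>w\<in>V. adj u w * adj_pow V adj m w z) * adj_pow V adj n z v)"
    unfolding sum_distrib_left sum_distrib_right mult.assoc by (rule sum.swap)
  finally show ?case by simp
qed

lemma adj_pow_right:
  assumes "u \<in> V" "v \<in> V" "finite V"
  shows "adj_pow V adj (Suc n) u v = (\<Sum>w\<in>V. adj_pow V adj n u w * adj w v)"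
proof -
  have "adj_pow V adj (n + 1) u v = (\<Sum>w\<in>V. adj_pow V adj n u w * adj_pow V adj 1 w v)"
    by (rule adj_pow_comp[OF assms(1,3)])
  moreover have "adj_pow V adj 1 w v = adj w v" for w
  proof -
    have "adj_pow V adj 1 w v = (\<Sum>z\<in>V. if z = v then adj w z else 0)"
      by simp (rule sum.cong, auto)
    then show ?thesis using assms(2,3) by (simp add: sum.delta')
  qed
  ultimately show ?thesis by simp
qed

lemma adj_pow_sym:
  assumes "\<And>u v. adj u v = adj v u" "u \<in> V" "v \<in> V" "finite V"
  shows "adj_pow V adj n u v = adj_pow V adj n v u"
  using assms(2,3)
proof (induction n arbitrary: u v)
  case 0 then show ?case by simp
next
  case (Suc n)
  have "adj_pow V adj (Suc n) u v = (\<Sum>w\<in>V. adj u w * adj_pow V adj n w v)" by simp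
  also have "\<dots> = (\<Sum>w\<in>V. adj_pow V adj n v w * adj w u)"
    by (rule sum.cong) (simp_all add: Suc.IH Suc.prems assms(1)[of u] mult.commute)
  also have "\<dots> = adj_pow V adj (Suc n) v u" using adj_pow_right[OF Suc.prems(2,1) assms(4)] by simp
  finally show ?case .
qed

lemma adj_pow_real:
  assumes "\<And>u v. cnj (adj u v) = adj u v"
  shows "cnj (adj_pow V adj n u v) = adj_pow V adj n u v"
proof (induction n arbitrary: u)
  case 0 then show ?case by simp
next
  case (Suc n) then show ?case by (simp add: assms)
qed

lemma tt_add: "tt 0 n = (\<Sum>j\<le>n. tt t j * tt (-t) (n - j))"
proof -
  have "tt (t + -t) n = (\<Sum>j\<le>n. tt t j * tt (-t) (n - j))"
    unfolding tt_exp
    using exp_series_add_commuting[of "\<i> * complex_of_real t" "\<i> * complex_of_real (-t)" n]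
    by (simp add: distrib_left)
  then show ?thesis by simp
qed

lemma transition_unitary:
  assumes "finite V" "\<And>u w. cmod (adj u w) \<le> 1" "u \<in> V" "v \<in> V"
  shows "(\<Sum>w\<in>V. transition V adj t u w * transition V adj (-t) w v) = (if u = v then 1 else 0)"
proof -
  define a where "a w n = tt t n * adj_pow V adj n u w" for w n
  define b where "b w n = tt (-t) n * adj_pow V adj n w v" for w n
  define c where "c w n = (\<Sum>j\<le>n. a w j * b w (n - j))" for w n
  have cs: "c w sums (transition V adj t u w * transition V adj (-t) w v)" for w
    unfolding c_def transition_tt a_def b_def
    by (rule Cauchy_product_sums) (rule summable_tt[OF assms(1,2)])+
  have "(\<Sum>w\<in>V. transition V adj t u w * transition V adj (-t) w v) = (\<Sum>w\<in>V. \<Sum>n. c w n)"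
    by (rule sum.cong) (use cs sums_unique in auto)
  also have "\<dots> = (\<Sum>n. \<Sum>w\<in>V. c w n)"
    by (rule suminf_sum[symmetric]) (use cs sums_summable in blast)
  also have "\<dots> = (\<Sum>n. if n = 0 then (if u = v then 1 else 0) else 0)"
  proof (rule arg_cong[where f=suminf], rule ext)
    fix n
    have "(\<Sum>w\<in>V. c w n) = (\<Sum>j\<le>n. tt t j * tt (-t) (n - j) * (\<Sum>w\<in>V. adj_pow V adj j u w * adj_pow V adj (n - j) w v))"
      unfolding c_def a_def b_def
    proof (subst sum.swap, rule sum.cong[OF refl])
      fix j
      show "(\<Sum>w\<in>V. tt t j * adj_pow V adj j u w * (tt (- t) (n - j) * adj_pow V adj (n - j) w v)) =
        tt t j * tt (- t) (n - j) * (\<Sum>w\<in>V. adj_pow V adj j u w * adj_pow V adj (n - j) w v)"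
        unfolding sum_distrib_left by (rule sum.cong[OF refl]) (simp add: mult_ac)
    qed
    also have "\<dots> = (\<Sum>j\<le>n. tt t j * tt (-t) (n - j)) * adj_pow V adj n u v"
      by (simp add: sum_distrib_right adj_pow_comp[OF assms(3,1), symmetric])
    also have "\<dots> = tt 0 n * adj_pow V adj n u v" by (simp add: tt_add[of n t])
    also have "\<dots> = (if n = 0 then (if u = v then 1 else 0) else 0)"
      by (simp add: tt_def)
    finally show "(\<Sum>w\<in>V. c w n) = (if n = 0 then (if u = v then 1 else 0) else 0)" .
  qed
  also have "\<dots> = (if u = v then 1 else 0)"
    using sums_single[of 0 "\<lambda>_. if u = v then 1 else 0 :: complex"] by (simp add: sums_iff)
  finally show ?thesis .
qed

lemma transition_sym:
  assumes "\<And>u v. adj u v = adj v u" "u \<in> V" "v \<in> V" "finite V"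
  shows "transition V adj t u v = transition V adj t v u"
  unfolding transition_def using adj_pow_sym[OF assms] by simp

lemma transition_cnj:
  assumes "finite V" "\<And>u w. cmod (adj u w) \<le> 1" "\<And>u v. cnj (adj u v) = adj u v"
  shows "cnj (transition V adj t u v) = transition V adj (-t) u v"
proof -
  have "(\<lambda>n. tt t n * adj_pow V adj n u v) sums transition V adj t u v"
    unfolding transition_tt by (rule summable_sums[OF summable_norm_cancel[OF summable_tt[OF assms(1,2)]]])
  then have "(\<lambda>n. cnj (tt t n * adj_pow V adj n u v)) sums cnj (transition V adj t u v)"
    by (simp only: sums_cnj)
  moreover have "cnj (tt t n * adj_pow V adj n u v) = tt (-t) n * adj_pow V adj n u v" for n
    by (simp add: tt_def adj_pow_real[OF assms(3)])
  ultimately have "(\<lambda>n. tt (-t) n * adj_pow V adj n u v) sums cnj (transition V adj t u v)" by simp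
  then show ?thesis unfolding transition_tt[of V adj "-t"] by (rule sums_unique)
qed

lemma transition_row_norm:
  assumes "finite V" "\<And>u w. cmod (adj u w) \<le> 1" "\<And>u v. cnj (adj u v) = adj u v"
    "\<And>u v. adj u v = adj v u" "u \<in> V"
  shows "(\<Sum>w\<in>V. (cmod (transition V adj t u w))^2) = 1"
proof -
  have "complex_of_real (\<Sum>w\<in>V. (cmod (transition V adj t u w))^2)
     = (\<Sum>w\<in>V. transition V adj t u w * transition V adj (-t) w u)"
    unfolding of_real_sum
  proof (rule sum.cong[OF refl])
    fix w assume w: "w \<in> V"
    have "transition V adj (-t) w u = cnj (transition V adj t u w)"
      using transition_cnj[OF assms(1,2,3), where t=t and u=u and v=w] transition_sym[OF assms(4) assms(5) w assms(1), where t="-t"]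
      by simp
    then show "complex_of_real ((cmod (transition V adj t u w))\<^sup>2) = transition V adj t u w * transition V adj (- t) w u"
      by (simp only: complex_norm_square)
  qed
  also have "\<dots> = 1" using transition_unitary[OF assms(1,2,5,5)] by simp
  finally show ?thesis by (simp only: of_real_eq_1_iff)
qed

lemma transition_zero:
  assumes "finite V" "\<And>u w. cmod (adj u w) \<le> 1" "\<And>u v. cnj (adj u v) = adj u v"
    "\<And>u v. adj u v = adj v u" "u \<in> V" "v \<in> V" "cmod (transition V adj t u v) = 1"
    "w \<in> V" "w \<noteq> v"
  shows "transition V adj t u w = 0"
proof -
  have "(\<Sum>x\<in>V. (cmod (transition V adj t u x))^2) = (cmod (transition V adj t u v))^2
     + (\<Sum>x\<in>V-{v}. (cmod (transition V adj t u x))^2)"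
    using assms(1,6) by (simp add: sum.remove)
  then have "(\<Sum>x\<in>V-{v}. (cmod (transition V adj t u x))^2) = 0"
    using transition_row_norm[OF assms(1-5)] assms(7) by simp
  then have "\<forall>x\<in>V-{v}. (cmod (transition V adj t u x))^2 = 0"
    using assms(1) by (subst (asm) sum_nonneg_eq_0_iff) auto
  then show ?thesis using assms(8,9) by simp
qed

lemma adj_pow_eigen:
  assumes "\<And>x. x \<in> V \<Longrightarrow> (\<Sum>w\<in>V. adj x w * g w) = \<theta> * g x" "x \<in> V" "finite V"
  shows "(\<Sum>w\<in>V. adj_pow V adj n x w * g w) = \<theta> ^ n * g x"
  using assms(2)
proof (induction n arbitrary: x)
  case 0
  have "(\<Sum>w\<in>V. adj_pow V adj 0 x w * g w) = (\<Sum>w\<in>V. if x = w then g w else 0)"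
    by (rule sum.cong) auto
  then show ?case using 0 assms(3) by (simp add: sum.delta)
next
  case (Suc n)
  have "(\<Sum>w\<in>V. adj_pow V adj (Suc n) x w * g w) = (\<Sum>z\<in>V. adj x z * (\<Sum>w\<in>V. adj_pow V adj n z w * g w))"
    unfolding adj_pow.simps sum_distrib_left sum_distrib_right mult.assoc by (rule sum.swap)
  also have "\<dots> = (\<Sum>z\<in>V. adj x z * (\<theta> ^ n * g z))"
    by (rule sum.cong[OF refl]) (simp add: Suc.IH)
  also have "\<dots> = \<theta> ^ n * (\<Sum>z\<in>V. adj x z * g z)"
    by (simp add: sum_distrib_left mult_ac)
  also have "\<dots> = \<theta> ^ Suc n * g x" using assms(1)[OF Suc.prems] by simp
  finally show ?case .
qed

lemma transition_eigen:
  assumes "finite V" "\<And>u w. cmod (adj u w) \<le> 1"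
    "\<And>x. x \<in> V \<Longrightarrow> (\<Sum>w\<in>V. adj x w * g w) = complex_of_real \<theta> * g x" "u \<in> V"
  shows "(\<Sum>w\<in>V. transition V adj t u w * g w) = exp (\<i> * complex_of_real (t * \<theta>)) * g u"
proof -
  have sm: "summable (\<lambda>n. tt t n * adj_pow V adj n u w)" for w
    by (rule summable_norm_cancel[OF summable_tt[OF assms(1,2)]])
  have "(\<Sum>w\<in>V. transition V adj t u w * g w) = (\<Sum>w\<in>V. \<Sum>n. tt t n * adj_pow V adj n u w * g w)"
    unfolding transition_tt by (rule sum.cong[OF refl]) (rule suminf_mult2[OF sm])
  also have "\<dots> = (\<Sum>n. \<Sum>w\<in>V. tt t n * adj_pow V adj n u w * g w)"
    by (rule suminf_sum[symmetric]) (rule summable_mult2[OF sm])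
  also have "\<dots> = (\<Sum>n. (\<i> * complex_of_real (t * \<theta>)) ^ n /\<^sub>R fact n * g u)"
  proof (rule arg_cong[where f=suminf], rule ext)
    fix n
    have "(\<Sum>w\<in>V. tt t n * adj_pow V adj n u w * g w) = tt t n * (\<Sum>w\<in>V. adj_pow V adj n u w * g w)"
      by (simp add: sum_distrib_left mult.assoc)
    also have "\<dots> = tt t n * (complex_of_real \<theta> ^ n * g u)"
      using adj_pow_eigen[OF assms(3) assms(4) assms(1)] by simp
    also have "\<dots> = (\<i> * complex_of_real (t * \<theta>)) ^ n /\<^sub>R fact n * g u"
      unfolding tt_exp by (simp add: power_mult_distrib scaleR_conv_of_real mult_ac)
    finally show "(\<Sum>w\<in>V. tt t n * adj_pow V adj n u w * g w) = (\<i> * complex_of_real (t * \<theta>)) ^ n /\<^sub>R fact n * g u" .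
  qed
  also have "\<dots> = exp (\<i> * complex_of_real (t * \<theta>)) * g u"
    unfolding exp_def by (rule suminf_mult2[symmetric]) (rule summable_exp_generic)
  finally show ?thesis .
qed

lemma pst_eigen:
  assumes "finite V" "\<And>u w. cmod (adj u w) \<le> 1" "\<And>u v. cnj (adj u v) = adj u v"
    "\<And>u v. adj u v = adj v u" "u \<in> V" "v \<in> V" "cmod (transition V adj t u v) = 1"
    "\<And>x. x \<in> V \<Longrightarrow> (\<Sum>w\<in>V. adj x w * g w) = complex_of_real \<theta> * g x"
  shows "transition V adj t u v * g v = exp (\<i> * complex_of_real (t * \<theta>)) * g u"
proof -
  have "(\<Sum>w\<in>V. transition V adj t u w * g w) = transition V adj t u v * g v
     + (\<Sum>w\<in>V-{v}. transition V adj t u w * g w)"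
    using assms(1,6) by (simp add: sum.remove)
  also have "(\<Sum>w\<in>V-{v}. transition V adj t u w * g w) = 0"
    using transition_zero[OF assms(1-7)] by (intro sum.neutral) auto
  finally show ?thesis using transition_eigen[OF assms(1,2,8,5)] by simp
qed



definition ch :: "nat \<Rightarrow> nat \<Rightarrow> nat \<Rightarrow> nat" where
  "ch n r t = (if t \<le> r then (n - t) choose (r - t) else 0)"

lemma cnt1:
  assumes "finite P" "T \<subseteq> P"
  shows "card {C. C \<subseteq> P \<and> card C = r \<and> T \<subseteq> C} = ch (card P) r (card T)"
proof (cases "card T \<le> r")
  case False
  have "{C. C \<subseteq> P \<and> card C = r \<and> T \<subseteq> C} = {}"
  proof safe
    fix C assume "C \<subseteq> P" "T \<subseteq> C" "r = card C"
    then have "card T \<le> card C" using assms(1) by (meson card_mono finite_subset)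
    then show "C \<in> {}" using False \<open>r = card C\<close> by simp
  qed
  then have "card {C. C \<subseteq> P \<and> card C = r \<and> T \<subseteq> C} = 0" by (simp only: card.empty)
  then show ?thesis using False by (simp add: ch_def)
next
  case True
  have fT: "finite T" using assms finite_subset by blast
  have "bij_betw (\<lambda>C. C - T) {C. C \<subseteq> P \<and> card C = r \<and> T \<subseteq> C} {D. D \<subseteq> P - T \<and> card D = r - card T}"
  proof (rule bij_betw_byWitness[where f'="\<lambda>D. D \<union> T"])
    show "\<forall>C\<in>{C. C \<subseteq> P \<and> card C = r \<and> T \<subseteq> C}. C - T \<union> T = C" by auto
    show "\<forall>D\<in>{D. D \<subseteq> P - T \<and> card D = r - card T}. D \<union> T - T = D" by auto
    show "(\<lambda>C. C - T) ` {C. C \<subseteq> P \<and> card C = r \<and> T \<subseteq> C} \<subseteq> {D. D \<subseteq> P - T \<and> card D = r - card T}"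
    proof (rule image_subsetI)
      fix C assume "C \<in> {C. C \<subseteq> P \<and> card C = r \<and> T \<subseteq> C}"
      then have C: "C \<subseteq> P" "T \<subseteq> C" "card C = r" by simp_all
      then have "card (C - T) = card C - card T"
        using assms(1) by (meson card_Diff_subset finite_subset fT)
      then show "C - T \<in> {D. D \<subseteq> P - T \<and> card D = r - card T}" using C by auto
    qed
    show "(\<lambda>D. D \<union> T) ` {D. D \<subseteq> P - T \<and> card D = r - card T} \<subseteq> {C. C \<subseteq> P \<and> card C = r \<and> T \<subseteq> C}"
    proof (rule image_subsetI)
      fix D assume "D \<in> {D. D \<subseteq> P - T \<and> card D = r - card T}"
      then have D: "D \<subseteq> P - T" "card D = r - card T" by simp_all
      have "finite D" using D assms(1) finite_subset by blast
      then have "card (D \<union> T) = card D + card T" using D fT by (subst card_Un_disjoint) auto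
      then show "D \<union> T \<in> {C. C \<subseteq> P \<and> card C = r \<and> T \<subseteq> C}" using D True assms by auto
    qed
  qed
  then have "card {C. C \<subseteq> P \<and> card C = r \<and> T \<subseteq> C} = card {D. D \<subseteq> P - T \<and> card D = r - card T}"
    by (rule bij_betw_same_card)
  also have "\<dots> = card (P - T) choose (r - card T)" using assms by (simp add: n_subsets)
  also have "card (P - T) = card P - card T" using assms fT by (simp add: card_Diff_subset)
  finally show ?thesis using True by (simp add: ch_def)
qed

lemma cnt2:
  assumes "finite S" "B \<subseteq> S" "T \<subseteq> S" "card B = k" "card (S - B) = k" "i \<le> k"
  shows "card {C. C \<subseteq> S \<and> card C = k \<and> card (B \<inter> C) = i \<and> T \<subseteq> C}
       = ch k i (card (T \<inter> B)) * ch k (k - i) (card (T - B))"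
proof -
  let ?L = "{C. C \<subseteq> S \<and> card C = k \<and> card (B \<inter> C) = i \<and> T \<subseteq> C}"
  let ?X = "{C. C \<subseteq> B \<and> card C = i \<and> T \<inter> B \<subseteq> C}"
  let ?Y = "{C. C \<subseteq> S - B \<and> card C = k - i \<and> T - B \<subseteq> C}"
  have fB: "finite B" using assms finite_subset by blast
  have "bij_betw (\<lambda>C. (C \<inter> B, C - B)) ?L (?X \<times> ?Y)"
  proof (rule bij_betw_byWitness[where f'="\<lambda>(C1, C2). C1 \<union> C2"])
    show "\<forall>C\<in>?L. (case (C \<inter> B, C - B) of (C1, C2) \<Rightarrow> C1 \<union> C2) = C" by auto
    show "\<forall>p\<in>?X \<times> ?Y. (\<lambda>C. (C \<inter> B, C - B)) (case p of (C1, C2) \<Rightarrow> C1 \<union> C2) = p" by auto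
    show "(\<lambda>C. (C \<inter> B, C - B)) ` ?L \<subseteq> ?X \<times> ?Y"
    proof (rule image_subsetI)
      fix C assume "C \<in> ?L"
      then have C: "C \<subseteq> S" "T \<subseteq> C" "card (B \<inter> C) = i" "card C = k" by simp_all
      have fC: "finite C" using C assms finite_subset by blast
      have e: "C = (C \<inter> B) \<union> (C - B)" by auto
      have "card C = card (C \<inter> B) + card (C - B)" using fC by (subst e, subst card_Un_disjoint) auto
      then have "card (C - B) = k - i" using C by (simp add: Int_commute)
      then show "(C \<inter> B, C - B) \<in> ?X \<times> ?Y" using C by (auto simp: Int_commute)
    qed
    show "(\<lambda>(C1, C2). C1 \<union> C2) ` (?X \<times> ?Y) \<subseteq> ?L"
    proof (rule image_subsetI)
      fix p assume "p \<in> ?X \<times> ?Y"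
      then obtain C1 C2 where p: "p = (C1, C2)" and X: "C1 \<subseteq> B" "T \<inter> B \<subseteq> C1" "card C1 = i"
        and Y: "C2 \<subseteq> S - B" "T - B \<subseteq> C2" "card C2 = k - i" by auto
      have f1: "finite C1" using X fB finite_subset by blast
      have f2: "finite C2" using Y assms finite_subset by blast
      have "card (C1 \<union> C2) = card C1 + card C2" using X Y f1 f2 by (subst card_Un_disjoint) auto
      then have c: "card (C1 \<union> C2) = k" using X Y assms(6) by simp
      have "B \<inter> (C1 \<union> C2) = C1" using X Y by auto
      then show "(case p of (C1, C2) \<Rightarrow> C1 \<union> C2) \<in> ?L" using X Y c assms p by auto
    qed
  qed
  then have "card ?L = card (?X \<times> ?Y)" by (rule bij_betw_same_card)
  also have "\<dots> = card ?X * card ?Y" by (rule card_cartesian_product)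
  also have "card ?X = ch k i (card (T \<inter> B))" using cnt1[OF fB, of "T \<inter> B" i] assms(4) by simp
  also have "card ?Y = ch k (k - i) (card (T - B))" using cnt1[of "S - B" "T - B" "k - i"] assms by auto
  finally show ?thesis .
qed



definition ind :: "nat set \<Rightarrow> nat set \<Rightarrow> complex" where
  "ind T C = (if T \<subseteq> C then 1 else 0)"

lemma J_nbr:
  assumes "B \<in> J_vertices k" "T \<subseteq> {1..2*k}" "i < k"
  shows "(\<Sum>C\<in>J_vertices k. J_adj i B C * ind T C) = of_nat (ch k i (card (T \<inter> B)) * ch k (k - i) (card (T - B)))"
proof -
  let ?S = "{1..2*k}"
  have B: "B \<subseteq> ?S" "card B = k" using assms(1) by (auto simp: J_vertices_def)
  have cSB: "card (?S - B) = k" using B by (simp add: card_Diff_subset finite_subset)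
  have fV: "finite (J_vertices k)" unfolding J_vertices_def by (rule finite_subset[of _ "Pow ?S"]) auto
  have "(\<Sum>C\<in>J_vertices k. J_adj i B C * ind T C)
      = (\<Sum>C\<in>J_vertices k. if C \<noteq> B \<and> card (B \<inter> C) = i \<and> T \<subseteq> C then 1 else 0)"
    by (rule sum.cong) (auto simp: J_adj_def ind_def)
  also have "\<dots> = of_nat (card {C \<in> J_vertices k. C \<noteq> B \<and> card (B \<inter> C) = i \<and> T \<subseteq> C})"
    using fV by (simp add: sum.inter_filter[symmetric])
  also have "{C \<in> J_vertices k. C \<noteq> B \<and> card (B \<inter> C) = i \<and> T \<subseteq> C}
      = {C. C \<subseteq> ?S \<and> card C = k \<and> card (B \<inter> C) = i \<and> T \<subseteq> C}"
    using B assms(3) by (auto simp: J_vertices_def)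
  also have "card \<dots> = ch k i (card (T \<inter> B)) * ch k (k - i) (card (T - B))"
    by (rule cnt2) (use B cSB assms in auto)
  finally show ?thesis .
qed

lemma card2_int: "a \<noteq> b \<Longrightarrow> card ({a, b} \<inter> B) = (if a \<in> B then 1 else 0) + (if b \<in> B then 1 else 0)"
  by (cases "a \<in> B"; cases "b \<in> B") (auto simp: Int_insert_left)
lemma card2_diff: "a \<noteq> b \<Longrightarrow> card ({a, b} - B) = (if a \<in> B then 0 else 1) + (if b \<in> B then 0 else 1)"
  by (cases "a \<in> B"; cases "b \<in> B") (auto simp: insert_Diff_if)

definition P1 :: "nat \<Rightarrow> nat \<Rightarrow> nat \<Rightarrow> nat" where
  "P1 k i m = ch k i m * ch k (k - i) (1 - m)"
definition P2 :: "nat \<Rightarrow> nat \<Rightarrow> nat \<Rightarrow> nat" where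
  "P2 k i m = ch k i m * ch k (k - i) (2 - m)"

definition th0 :: "nat \<Rightarrow> nat \<Rightarrow> real" where
  "th0 k i = real (ch k i 0 * ch k (k - i) 0)"
definition th1 :: "nat \<Rightarrow> nat \<Rightarrow> real" where
  "th1 k i = real (P1 k i 1) - real (P1 k i 0)"
definition th2 :: "nat \<Rightarrow> nat \<Rightarrow> real" where
  "th2 k i = real (P2 k i 2) - 2 * real (P2 k i 1) + real (P2 k i 0)"

lemma N1: "ch k i (card ({a} \<inter> B)) * ch k (k - i) (card ({a} - B)) = P1 k i (if a \<in> B then 1 else 0)"
proof (cases "a \<in> B")
  case True then have "{a} \<inter> B = {a}" "{a} - B = {}" by auto
  then show ?thesis using True by (simp add: P1_def)
next
  case False then have "{a} \<inter> B = {}" "{a} - B = {a}" by auto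
  then show ?thesis using False by (simp add: P1_def)
qed

lemma N2: "a \<noteq> b \<Longrightarrow> ch k i (card ({a, b} \<inter> B)) * ch k (k - i) (card ({a, b} - B))
   = P2 k i ((if a \<in> B then 1 else 0) + (if b \<in> B then 1 else 0))"
  unfolding card2_int card2_diff P2_def by (cases "a \<in> B"; cases "b \<in> B") (simp_all add: numeral_2_eq_2)

lemma eig0:
  assumes "B \<in> J_vertices k" "i < k"
  shows "(\<Sum>C\<in>J_vertices k. J_adj i B C * 1) = complex_of_real (th0 k i) * 1"
  using J_nbr[OF assms(1) _ assms(2), of "{}"] by (simp add: ind_def th0_def)

lemma eig1:
  assumes "B \<in> J_vertices k" "i < k" "x \<in> {1..2*k}" "x' \<in> {1..2*k}" "x \<noteq> x'"
  shows "(\<Sum>C\<in>J_vertices k. J_adj i B C * (ind {x} C - ind {x'} C)) = complex_of_real (th1 k i) * (ind {x} B - ind {x'} B)"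
proof -
  have "(\<Sum>C\<in>J_vertices k. J_adj i B C * (ind {x} C - ind {x'} C))
     = (\<Sum>C\<in>J_vertices k. J_adj i B C * ind {x} C) - (\<Sum>C\<in>J_vertices k. J_adj i B C * ind {x'} C)"
    by (simp add: right_diff_distrib sum_subtractf)
  also have "\<dots> = of_nat (P1 k i (if x \<in> B then 1 else 0)) - of_nat (P1 k i (if x' \<in> B then 1 else 0))"
  proof -
    have h: "(\<Sum>C\<in>J_vertices k. J_adj i B C * ind {a} C) = of_nat (P1 k i (if a \<in> B then 1 else 0))"
      if "a \<in> {1..2*k}" for a
      using J_nbr[OF assms(1) _ assms(2), of "{a}"] that N1[of k i a B] by simp
    show ?thesis using assms(3,4) by (simp add: h)
  qed
  also have "\<dots> = complex_of_real (th1 k i) * (ind {x} B - ind {x'} B)"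
    using assms(5) by (cases "x \<in> B"; cases "x' \<in> B") (simp_all add: th1_def ind_def)
  finally show ?thesis .
qed

lemma eig2:
  assumes "B \<in> J_vertices k" "i < k" "x \<in> {1..2*k}" "x' \<in> {1..2*k}" "y \<in> {1..2*k}" "y' \<in> {1..2*k}"
    "distinct [x, x', y, y']"
  shows "(\<Sum>C\<in>J_vertices k. J_adj i B C * (ind {x, y} C - ind {x, y'} C - ind {x', y} C + ind {x', y'} C))
     = complex_of_real (th2 k i) * (ind {x, y} B - ind {x, y'} B - ind {x', y} B + ind {x', y'} B)"
proof -
  let ?m = "\<lambda>a. (if a \<in> B then 1 else 0) :: nat"
  have "(\<Sum>C\<in>J_vertices k. J_adj i B C * (ind {x, y} C - ind {x, y'} C - ind {x', y} C + ind {x', y'} C))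
     = (\<Sum>C\<in>J_vertices k. J_adj i B C * ind {x, y} C) - (\<Sum>C\<in>J_vertices k. J_adj i B C * ind {x, y'} C)
       - (\<Sum>C\<in>J_vertices k. J_adj i B C * ind {x', y} C) + (\<Sum>C\<in>J_vertices k. J_adj i B C * ind {x', y'} C)"
    by (simp add: distrib_left right_diff_distrib sum_subtractf sum.distrib)
  also have "\<dots> = of_nat (P2 k i (?m x + ?m y)) - of_nat (P2 k i (?m x + ?m y')) - of_nat (P2 k i (?m x' + ?m y)) + of_nat (P2 k i (?m x' + ?m y'))"
  proof -
    have h: "(\<Sum>C\<in>J_vertices k. J_adj i B C * ind {a, b} C) = of_nat (P2 k i (?m a + ?m b))"
      if "a \<in> {1..2*k}" "b \<in> {1..2*k}" "a \<noteq> b" for a b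
      using J_nbr[OF assms(1) _ assms(2), of "{a, b}"] that N2[of a b k i B] by simp
    show ?thesis using assms(3-7) by (simp add: h)
  qed
  also have "\<dots> = complex_of_real (th2 k i) * (ind {x, y} B - ind {x, y'} B - ind {x', y} B + ind {x', y'} B)"
    using assms(7) by (cases "x \<in> B"; cases "x' \<in> B"; cases "y \<in> B"; cases "y' \<in> B") (simp_all add: th2_def ind_def numeral_2_eq_2)
  finally show ?thesis .
qed



lemma two_part: "(n::nat) > 0 \<Longrightarrow> \<exists>f m. n = 2 ^ f * m \<and> odd m"
proof (induction n rule: less_induct)
  case (less n)
  show ?case
  proof (cases "even n")
    case True
    then obtain h where h: "n = 2 * h" by blast
    then have "h < n" "h > 0" using less.prems by auto
    then obtain f m where "h = 2 ^ f * m" "odd m" using less.IH by blast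
    then show ?thesis using h by (intro exI[of _ "Suc f"] exI[of _ m]) simp
  next
    case False
    then show ?thesis by (intro exI[of _ 0] exI[of _ n]) simp
  qed
qed

lemma two_adic:
  fixes k i :: nat
  assumes "0 < i" "i < k" "odd (k choose i)" "even ((k - 1) choose i)"
  shows "\<exists>f k' i'. k = 2 ^ f * k' \<and> i = 2 ^ f * i' \<and> odd i'"
proof -
  obtain f k' where kf: "k = 2 ^ f * k'" "odd k'" using two_part[of k] assms by auto
  have "(k - i) * (k choose i) = k * ((k - 1) choose i)" by (rule binomial_absorb_comp)
  moreover have "2 ^ Suc f dvd k * ((k - 1) choose i)"
    using kf assms(4) by (auto simp: mult_dvd_mono)
  ultimately have "2 ^ Suc f dvd (k - i) * (k choose i)" by simp
  then have "2 ^ Suc f dvd (k - i)"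
    using assms(3) by (subst (asm) coprime_dvd_mult_left_iff) simp_all
  then obtain r where r: "k - i = 2 ^ Suc f * r" by blast
  have "i = k - (k - i)" using assms by simp
  also have "\<dots> = 2 ^ f * k' - 2 ^ f * (2 * r)" using kf r by simp
  also have "\<dots> = 2 ^ f * (k' - 2 * r)" by (simp add: diff_mult_distrib2)
  finally have ii: "i = 2 ^ f * (k' - 2 * r)" .
  then have "k' - 2 * r > 0" using assms(1) by (cases "k' - 2 * r") auto
  then have "odd (k' - 2 * r)" using kf(2) by presburger
  then show ?thesis using kf ii by blast
qed

lemma rel:
  fixes K I c al be ga de :: real
  assumes "K > 1" "K * al = I * c" "K * be = (K - I) * c" "K * (K - 1) * ga = I * (I - 1) * c"
    "K * (K - 1) * de = (K - I) * (K - I - 1) * c"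
  shows "K * (K - 1) * (c * c - (ga * c - 2 * (al * be) + c * de)) = I * (2 * K - 1) * (c * c - (al * c - c * be))"
proof -
  have K0: "K \<noteq> 0" using assms(1) by auto
  have "K * (K * (K - 1) * (c * c - (ga * c - 2 * (al * be) + c * de))) = K * (I * (2 * K - 1) * (c * c - (al * c - c * be)))"
    using assms(2-5) by algebra
  then show ?thesis using K0 by simp
qed



lemma ch1: "0 < r \<Longrightarrow> n * ch n r 1 = r * (n choose r)"
  by (simp add: ch_def times_binomial_minus1_eq)

lemma ch2: assumes "0 < r" shows "n * (n - 1) * ch n r 2 = r * (r - 1) * (n choose r)"
proof (cases "r \<ge> 2")
  case True
  have "(r - 1) * ((n - 1) choose (r - 1)) = (n - 1) * ((n - 1 - 1) choose (r - 1 - 1))"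
    using True by (intro times_binomial_minus1_eq) simp
  then have "(r - 1) * ((n - 1) choose (r - 1)) = (n - 1) * ((n - 2) choose (r - 2))" by (simp add: numeral_2_eq_2)
  moreover have "r * (n choose r) = n * ((n - 1) choose (r - 1))" using assms by (rule times_binomial_minus1_eq)
  ultimately have "r * (r - 1) * (n choose r) = n * ((n - 1) * ((n - 2) choose (r - 2)))"
    by (metis mult.assoc mult.left_commute)
  then show ?thesis using True by (simp add: ch_def mult.assoc)
next
  case False
  then have "r = 1" using assms by simp
  then show ?thesis by (simp add: ch_def)
qed

lemma rel_th:
  assumes "2 \<le> k" "0 < i" "i < k"
  shows "real k * (real k - 1) * (th0 k i - th2 k i) = real i * (2 * real k - 1) * (th0 k i - th1 k i)"
proof -
  define c where "c = real (k choose i)"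
  have sym: "k choose (k - i) = k choose i" using assms by (simp add: binomial_symmetric[symmetric])
  have c0: "ch k (k - i) 0 = k choose i" "ch k i 0 = k choose i" using sym by (simp_all add: ch_def)
  have a: "real k * real (ch k i 1) = real i * c"
    using ch1[of i k] assms unfolding c_def by (simp flip: of_nat_mult)
  have b: "real k * real (ch k (k - i) 1) = (real k - real i) * c"
  proof -
    have "real (k * ch k (k - i) 1) = real ((k - i) * (k choose i))" using ch1[of "k - i" k] assms sym by simp
    then show ?thesis using assms unfolding c_def by (simp add: of_nat_diff)
  qed
  have g: "real k * (real k - 1) * real (ch k i 2) = real i * (real i - 1) * c"
  proof -
    have "real (k * (k - 1) * ch k i 2) = real (i * (i - 1) * (k choose i))" using ch2[of i k] assms by simp
    then show ?thesis using assms unfolding c_def by (simp add: of_nat_diff)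
  qed
  have d: "real k * (real k - 1) * real (ch k (k - i) 2) = (real k - real i) * (real k - real i - 1) * c"
  proof -
    have "real (k * (k - 1) * ch k (k - i) 2) = real ((k - i) * (k - i - 1) * (k choose (k - i)))" using ch2[of "k - i" k] assms by simp
    then show ?thesis using assms sym unfolding c_def by (simp add: of_nat_diff)
  qed
  have "real k > 1" using assms by simp
  from rel[OF this a b g d]
  show ?thesis unfolding th0_def th1_def th2_def P1_def P2_def c0 c_def by (simp add: mult_ac c0)
qed



theorem mainTheorem9:
  fixes k i :: nat
  assumes "k \<ge> 2" and "1 \<le> i" and "i \<le> k - 1"
    and "odd (k choose i)" and "even ((k - 1) choose i)"
  shows "\<not> has_PST (J_vertices k) (J_adj i)"
proof
  assume "has_PST (J_vertices k) (J_adj i)"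
  then obtain u v \<tau> where uV: "u \<in> J_vertices k" and vV: "v \<in> J_vertices k" and uv: "u \<noteq> v"
    and h1: "cmod (transition (J_vertices k) (J_adj i) \<tau> u v) = 1"
    unfolding has_PST_def by blast
  let ?V = "J_vertices k"
  let ?S = "{1..2*k}"
  let ?h = "transition ?V (J_adj i) \<tau> u v"
  have ik: "i < k" using assms by simp
  have fV: "finite ?V" unfolding J_vertices_def by (rule finite_subset[of _ "Pow ?S"]) auto
  have b1: "\<And>a b. cmod (J_adj i a b) \<le> 1" by (simp add: J_adj_def)
  have rl: "\<And>a b. cnj (J_adj i a b) = J_adj i a b" by (simp add: J_adj_def)
  have sy: "\<And>a b. J_adj i a b = J_adj i b a" by (auto simp: J_adj_def Int_commute)
  have pe: "?h * g v = exp (\<i> * complex_of_real (\<tau> * \<theta>)) * g u"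
    if "\<And>B. B \<in> ?V \<Longrightarrow> (\<Sum>C\<in>?V. J_adj i B C * g C) = complex_of_real \<theta> * g B" for g \<theta>
    by (rule pst_eigen[OF fV b1 rl sy uV vV h1 that])
  have u: "u \<subseteq> ?S" "card u = k" and v: "v \<subseteq> ?S" "card v = k" using uV vV by (auto simp: J_vertices_def)
  have fu: "finite u" "finite v" using u v finite_subset by auto
  have cS: "card ?S = 2 * k" by simp
  have cUI: "card (u \<union> v) + card (u \<inter> v) = 2 * k" using card_Un_Int[OF fu] u v by simp
  have dis_iff: "u \<inter> v = {} \<longleftrightarrow> u \<union> v = ?S"
  proof
    assume "u \<inter> v = {}"
    then have "card (u \<union> v) = card ?S" using cUI by simp
    then show "u \<union> v = ?S" using u v by (intro card_subset_eq) auto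
  next
    assume "u \<union> v = ?S"
    then have "card (u \<inter> v) = 0" using cUI by simp
    then show "u \<inter> v = {}" using fu by simp
  qed
  show False
  proof (cases "u \<inter> v = {}")
    case False
    then obtain x where x: "x \<in> u" "x \<in> v" by blast
    have "u \<union> v \<noteq> ?S" using False dis_iff by simp
    then obtain x' where x': "x' \<in> ?S" "x' \<notin> u" "x' \<notin> v" using u v by blast
    have "\<not> u \<subseteq> v" using u v uv fu by (metis card_subset_eq)
    then obtain z where z: "z \<in> u" "z \<notin> v" by blast
    have "\<not> v \<subseteq> u" using u v uv fu by (metis card_subset_eq)
    then obtain z' where z': "z' \<in> v" "z' \<notin> u" by blast
    have e1: "?h * (ind {x} v - ind {x'} v) = exp (\<i> * complex_of_real (\<tau> * th1 k i)) * (ind {x} u - ind {x'} u)"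
      by (rule pe, rule eig1[OF _ ik]) (use x x' u in auto)
    have e2: "?h * (ind {z} v - ind {z'} v) = exp (\<i> * complex_of_real (\<tau> * th1 k i)) * (ind {z} u - ind {z'} u)"
      by (rule pe, rule eig1[OF _ ik]) (use z z' u v in auto)
    have "?h = exp (\<i> * complex_of_real (\<tau> * th1 k i))" using e1 x x' by (simp add: ind_def)
    moreover have "- ?h = exp (\<i> * complex_of_real (\<tau> * th1 k i))" using e2 z z' by (simp add: ind_def)
    ultimately have "?h = 0" by simp
    then show False using h1 by simp
  next
    case True
    then have vS: "v = ?S - u" using dis_iff by blast
    obtain x y where xy: "x \<in> u" "y \<in> u" "x \<noteq> y"
    proof -
      have "1 < card u" using u assms(1) by simp
      then show ?thesis using that by (metis One_nat_def card_le_Suc0_iff_eq fu(1) not_le)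
    qed
    obtain x' y' where xy': "x' \<in> v" "y' \<in> v" "x' \<noteq> y'"
    proof -
      have "1 < card v" using v assms(1) by simp
      then show ?thesis using that by (metis One_nat_def card_le_Suc0_iff_eq fu(2) not_le)
    qed
    have nu: "x' \<notin> u" "y' \<notin> u" using xy' vS by auto
    have nv: "x \<notin> v" "y \<notin> v" using xy vS by auto
    let ?E = "\<lambda>\<theta>. exp (\<i> * complex_of_real (\<tau> * \<theta>))"
    have e0: "?h * 1 = ?E (th0 k i) * 1"
      by (rule pe, rule eig0[OF _ ik])
    have e1: "?h * (ind {x} v - ind {x'} v) = ?E (th1 k i) * (ind {x} u - ind {x'} u)"
      by (rule pe, rule eig1[OF _ ik]) (use xy xy' nu u v in auto)
    have e2: "?h * (ind {x, y} v - ind {x, y'} v - ind {x', y} v + ind {x', y'} v)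
        = ?E (th2 k i) * (ind {x, y} u - ind {x, y'} u - ind {x', y} u + ind {x', y'} u)"
      by (rule pe, rule eig2[OF _ ik]) (use xy xy' nu nv u v in auto)
    have E0: "?E (th0 k i) = ?h" using e0 by simp
    have E1: "?E (th1 k i) = - ?h" using e1 xy xy' nu nv by (simp add: ind_def)
    have E2: "?E (th2 k i) = ?h" using e2 xy xy' nu nv by (simp add: ind_def)
    have hnz: "?h \<noteq> 0" using h1 by auto
    have D1: "?E (th0 k i - th1 k i) = -1"
    proof -
      have "?E (th0 k i - th1 k i) = exp (\<i> * complex_of_real (\<tau> * th0 k i) - \<i> * complex_of_real (\<tau> * th1 k i))"
        by (simp add: right_diff_distrib)
      also have "\<dots> = ?E (th0 k i) / ?E (th1 k i)" by (rule exp_diff)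
      finally show ?thesis using E0 E1 hnz by simp
    qed
    have D2: "?E (th0 k i - th2 k i) = 1"
    proof -
      have "?E (th0 k i - th2 k i) = exp (\<i> * complex_of_real (\<tau> * th0 k i) - \<i> * complex_of_real (\<tau> * th2 k i))"
        by (simp add: right_diff_distrib)
      also have "\<dots> = ?E (th0 k i) / ?E (th2 k i)" by (rule exp_diff)
      finally show ?thesis using E0 E2 hnz by simp
    qed
    obtain f k' i' where fk: "k = 2 ^ f * k'" "i = 2 ^ f * i'" "odd i'"
      using two_adic[of i k] assms ik by auto
    define p where "p = i' * (2 * k - 1)"
    define q where "q = k' * (k - 1)"
    have podd: "odd p" unfolding p_def using fk(3) assms(1) by simp
    have R: "real k * (real k - 1) * (th0 k i - th2 k i) = real i * (2 * real k - 1) * (th0 k i - th1 k i)"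
      using rel_th[of k i] assms by simp
    have rq: "real q = real k' * (real k - 1)" unfolding q_def using assms(1) by (simp add: of_nat_diff)
    have rp: "real p = real i' * (2 * real k - 1)" unfolding p_def using assms(1) by (simp add: of_nat_diff)
    have rk: "real k = 2 ^ f * real k'" and ri: "real i = 2 ^ f * real i'" using fk by simp_all
    have "2 ^ f * (real q * (th0 k i - th2 k i)) = 2 ^ f * (real p * (th0 k i - th1 k i))"
    proof -
      have "2 ^ f * (real q * (th0 k i - th2 k i)) = real k * (real k - 1) * (th0 k i - th2 k i)"
        unfolding rq by (subst (1) rk) (simp add: mult_ac)
      also have "\<dots> = real i * (2 * real k - 1) * (th0 k i - th1 k i)" by (rule R)
      also have "\<dots> = 2 ^ f * (real p * (th0 k i - th1 k i))"
        unfolding rp ri by (simp add: mult_ac)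
      finally show ?thesis .
    qed
    then have pq: "real p * (th0 k i - th1 k i) = real q * (th0 k i - th2 k i)" by simp
    have "?E (th0 k i - th1 k i) ^ p = -1" using D1 podd by simp
    moreover have "?E (th0 k i - th2 k i) ^ q = 1" using D2 by simp
    moreover have "?E (th0 k i - th1 k i) ^ p = ?E (th0 k i - th2 k i) ^ q"
    proof -
      have "?E (th0 k i - th1 k i) ^ p = exp (of_nat p * (\<i> * complex_of_real (\<tau> * (th0 k i - th1 k i))))"
        by (rule exp_of_nat_mult[symmetric])
      also have "of_nat p * (\<i> * complex_of_real (\<tau> * (th0 k i - th1 k i)))
         = \<i> * complex_of_real (\<tau> * (real p * (th0 k i - th1 k i)))" by (simp add: mult_ac)
      also have "\<dots> = of_nat q * (\<i> * complex_of_real (\<tau> * (th0 k i - th2 k i)))" unfolding pq by (simp add: mult_ac)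
      also have "exp \<dots> = ?E (th0 k i - th2 k i) ^ q" by (rule exp_of_nat_mult)
      finally show ?thesis .
    qed
    ultimately show False by simp
  qed
qed

end
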